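(* Let $n\ge1$, $l\in\{1,\dots,n\}$, and let $G$ and $N$ be random variables with joint distribution given by $$P(G=i,\ N-1-G=j)=\frac{1}{n}\,\frac{\binom{i+j}{i}\binom{n-1-i-j}{l-1-i}}{\binom{n-1}{l-1}}$$ for nonnegative integers $i,j$. Then $$\mathrm{var}\big(H(G)+H(N-1-G)\big)\le 28 .$$
   Context: $H(k)=H_k:=\sum_{i=1}^k 1/i$ for $k\in\mathbb{N}$ are the harmonic numbers, with $H(0)=H_0=0$. Binomial coefficients $\binom{a}{b}$ are $0$ if $b<0$ or $b>a$. *)

theory Defs
  imports "HOL-Probability.Probability"
begin

definition ibinom :: "int \<Rightarrow> int \<Rightarrow> real" where
  "ibinom a b = (if b < 0 \<or> b > a then 0 else real (nat a choose nat b))"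

definition joint_prob :: "nat \<Rightarrow> nat \<Rightarrow> nat \<Rightarrow> nat \<Rightarrow> real" where
  "joint_prob n l i j =
     (1 / real n) * (ibinom (int i + int j) (int i) *
        ibinom (int n - 1 - int i - int j) (int l - 1 - int i)) / ibinom (int n - 1) (int l - 1)"

end

theory Submission
  imports Defs "HOL-Computational_Algebra.Formal_Power_Series"
begin


lemma chu:
  "(\<Sum>j\<le>R. real ((a+j) choose a) * real ((b+(R-j)) choose b)) = real ((a+b+1+R) choose R)"
proof -
  have neg: "((-(of_nat c + 1)) gchoose k :: real) = (-1)^k * real ((c+k) choose k)" for c k
  proof -
    have "((-(of_nat c + 1)) gchoose k :: real) = (-1)^k * ((of_nat c + 1 + of_nat k - 1) gchoose k)"
      by (rule gbinomial_minus)
    also have "(of_nat c + 1 + of_nat k - 1 :: real) = of_nat (c+k)" by simp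
    finally show ?thesis by (simp add: binomial_gbinomial)
  qed
  note V = gbinomial_Vandermonde[of "-(of_nat a + 1) :: real" "-(of_nat b + 1)" R]
  have "(\<Sum>j\<le>R. real ((a+j) choose a) * real ((b+(R-j)) choose b))
      = (\<Sum>j\<in>{0..R}. (-1)^R * (((-(of_nat a + 1)) gchoose j :: real) * ((-(of_nat b + 1)) gchoose (R-j))))"
  proof (rule sum.cong)
    fix j assume j: "j \<in> {0..R}"
    have "(-1::real)^R * ((-1)^j * (-1)^(R-j)) = 1"
      using j by (simp add: power_add[symmetric] flip: power_mult power_add)
    then show "real ((a+j) choose a) * real ((b+(R-j)) choose b)
      = (-1)^R * (((-(of_nat a + 1)) gchoose j :: real) * ((-(of_nat b + 1)) gchoose (R-j)))"
    proof -
      have s: "(x+y) choose x = (x+y) choose y" for x y :: nat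
        using binomial_symmetric[of x "x+y"] by simp
      have e: "(c+k) choose k = (c+k) choose c" for c k :: nat using s[of c k] by simp
      define u :: real where "u = (-1)^j"
      define v :: real where "v = (-1)^(R-j)"
      define w :: real where "w = (-1)^R"
      have uvw: "w * (u * v) = 1" unfolding u_def v_def w_def by fact
      have "w * ((u * real ((a + j) choose a)) * (v * real ((b + (R-j)) choose b)))
          = (w * (u * v)) * (real ((a + j) choose a) * real ((b + (R-j)) choose b))"
        by (simp only: ac_simps)
      then show ?thesis unfolding neg e u_def[symmetric] v_def[symmetric] w_def[symmetric] uvw
        by simp
    qed
  qed auto
  also have "\<dots> = (-1)^R * ((-(of_nat (a+b+1) + 1)) gchoose R :: real)"
  proof -
    have ee: "(-(of_nat a+1)) + (-(of_nat b+1)) = (-(of_nat (a+b+1) + 1 :: real))" by simp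
    show ?thesis using V unfolding ee by (simp add: sum_distrib_left[symmetric])
  qed
  also have "\<dots> = real ((a+b+1+R) choose R)"
    unfolding neg by (simp flip: power_add power_mult_distrib)
  finally show ?thesis .
qed

lemma harm_lin: "(\<Sum>k<m. harm m - harm k :: real) = real m"
proof (induction m)
  case (Suc m)
  have "(\<Sum>k<Suc m. harm (Suc m) - harm k :: real)
      = (\<Sum>k<m. (harm m - harm k) + 1 / real (Suc m)) + 1 / real (Suc m)"
    by (simp add: harm_Suc field_simps)
  also have "\<dots> = real m + real m / real (Suc m) + 1 / real (Suc m)"
    using Suc by (simp add: sum.distrib)
  also have "\<dots> = real (Suc m)" by (simp add: field_simps)
  finally show ?case .
qed simp

lemma harm_sq: "(\<Sum>k<m. (harm m - harm k)^2 :: real) \<le> 2 * real m"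
proof (induction m)
  case (Suc m)
  define d :: real where "d = 1 / real (Suc m)"
  have "(\<Sum>k<Suc m. (harm (Suc m) - harm k)^2 :: real)
      = (\<Sum>k<m. ((harm m - harm k) + d)^2) + d^2"
    by (simp add: harm_Suc d_def field_simps)
  also have "\<dots> = (\<Sum>k<m. (harm m - harm k)^2) + 2 * d * (\<Sum>k<m. harm m - harm k) + real m * d^2 + d^2"
  proof -
    have "(\<Sum>k<m. ((harm m - harm k) + d)^2) = (\<Sum>k<m. (harm m - harm k)^2 + 2 * d * (harm m - harm k) + d^2)"
      by (rule sum.cong) (auto simp: power2_eq_square algebra_simps)
    also have "\<dots> = (\<Sum>k<m. (harm m - harm k)^2) + 2 * d * (\<Sum>k<m. harm m - harm k) + real m * d^2"
      by (simp add: sum.distrib sum_distrib_left)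
    finally show ?thesis by simp
  qed
  also have "\<dots> = (\<Sum>k<m. (harm m - harm k)^2) + (2 * real m + 1) / real (Suc m)"
  proof -
    have "real m * d^2 + d^2 = d" unfolding d_def
      by (simp add: power2_eq_square divide_simps)
    moreover have "2 * d * real m + d = (2 * real m + 1) / real (Suc m)"
      by (simp add: d_def field_simps)
    ultimately show ?thesis unfolding harm_lin by linarith
  qed
  also have "(2 * real m + 1) / real (Suc m) \<le> 2" by (simp add: field_simps)
  finally show ?case using Suc by simp
qed simp


lemma p_form:
  assumes "i \<le> L" "j \<le> R"
  shows "joint_prob (L+R+1) (L+1) i j = real((i+j) choose i) * real(((L-i)+(R-j)) choose (L-i))
          / (real (L+R+1) * real((L+R) choose L))"
proof -
  have e1: "int (L+R+1) - 1 - int i - int j = int ((L-i)+(R-j))" using assms by simp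
  have e2: "int (L+1) - 1 - int i = int (L-i)" using assms by simp
  have e3: "int (L+R+1) - 1 = int (L+R)" by simp
  have e4: "int (L+1) - 1 = int L" by simp
  have b1: "ibinom (int i + int j) (int i) = real((i+j) choose i)"
    unfolding ibinom_def by (simp flip: of_nat_add)
  have b2: "ibinom (int (L+R+1) - 1 - int i - int j) (int (L+1) - 1 - int i) = real(((L-i)+(R-j)) choose (L-i))"
    unfolding e1 e2 ibinom_def nat_int using assms by (simp del: of_nat_add)
  have b3: "ibinom (int (L+R+1) - 1) (int (L+1) - 1) = real((L+R) choose L)"
    unfolding e3 e4 ibinom_def nat_int by (simp del: of_nat_add)
  show ?thesis unfolding joint_prob_def b1 b2 b3
    by simp
qed

lemma p_zero:
  assumes "\<not> (i \<le> L \<and> j \<le> R)"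
  shows "joint_prob (L+R+1) (L+1) i j = 0"
  using assms unfolding joint_prob_def ibinom_def by auto

lemma p_nonneg: "joint_prob n l i j \<ge> 0"
  unfolding joint_prob_def ibinom_def by auto

lemma margG:
  assumes "i \<le> L"
  shows "(\<Sum>j\<le>R. joint_prob (L+R+1) (L+1) i j) = 1 / real (L+1)"
proof -
  have "(\<Sum>j\<le>R. joint_prob (L+R+1) (L+1) i j) =
     (\<Sum>j\<le>R. real((i+j) choose i) * real(((L-i)+(R-j)) choose (L-i))) / (real (L+R+1) * real((L+R) choose L))"
    unfolding sum_divide_distrib by (intro sum.cong refl, rule p_form) (use assms in auto)
  also have "(\<Sum>j\<le>R. real((i+j) choose i) * real(((L-i)+(R-j)) choose (L-i))) = real ((i+(L-i)+1+R) choose R)"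
    by (rule chu)
  also have "i+(L-i)+1+R = L+R+1" using assms by simp
  also have "real ((L+R+1) choose R) = real ((L+R+1) choose (L+1))"
    using binomial_symmetric[of R "L+R+1"] by simp
  also have "real (L+R+1) * real((L+R) choose L) = real ((L+R+1) choose (L+1)) * real (L+1)"
  proof -
    have h: "(L+R+1) * ((L+R) choose L) = ((L+R+1) choose (L+1)) * (L+1)"
      using Suc_times_binomial_eq[of "L+R" L] by (simp only: Suc_eq_plus1)
    show ?thesis using arg_cong[OF h, of real] by (simp only: of_nat_mult)
  qed
  also have "real ((L+R+1) choose (L+1)) / (real ((L+R+1) choose (L+1)) * real (L+1)) = 1 / real (L+1)"
  proof -
    have "0 < (L+R+1) choose (L+1)" by (simp only: zero_less_binomial_iff)
    then show ?thesis by (simp del: binomial_Suc_Suc)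
  qed
  finally show ?thesis .
qed

lemma margD:
  assumes "j \<le> R"
  shows "(\<Sum>i\<le>L. joint_prob (L+R+1) (L+1) i j) = 1 / real (R+1)"
proof -
  have s: "(x+y) choose x = (x+y) choose y" for x y :: nat
    using binomial_symmetric[of x "x+y"] by simp
  have "(\<Sum>i\<le>L. joint_prob (L+R+1) (L+1) i j) =
     (\<Sum>i\<le>L. real((i+j) choose i) * real(((L-i)+(R-j)) choose (L-i))) / (real (L+R+1) * real((L+R) choose L))"
    unfolding sum_divide_distrib by (intro sum.cong refl, rule p_form) (use assms in auto)
  also have "(\<Sum>i\<le>L. real((i+j) choose i) * real(((L-i)+(R-j)) choose (L-i)))
      = (\<Sum>i\<le>L. real((j+i) choose j) * real(((R-j)+(L-i)) choose (R-j)))"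
    by (intro sum.cong refl) (metis add.commute s)
  also have "\<dots> = real ((j+(R-j)+1+L) choose L)"
    by (rule chu)
  also have "j+(R-j)+1+L = L+R+1" using assms by simp
  also have "real ((L+R+1) choose L) = real ((R+L+1) choose (R+1))"
    using binomial_symmetric[of L "L+R+1"] by (simp add: add.commute)
  also have "real (L+R+1) * real((L+R) choose L) = real ((R+L+1) choose (R+1)) * real (R+1)"
  proof -
    have h: "(R+L+1) * ((R+L) choose R) = ((R+L+1) choose (R+1)) * (R+1)"
      using Suc_times_binomial_eq[of "R+L" R] by (simp only: Suc_eq_plus1)
    have "(L+R+1) * ((L+R) choose L) = ((R+L+1) choose (R+1)) * (R+1)"
      using h s[of L R] by (simp add: add.commute)
    then show ?thesis using arg_cong[OF h, of real] by (metis of_nat_mult)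
  qed
  also have "real ((R+L+1) choose (R+1)) / (real ((R+L+1) choose (R+1)) * real (R+1)) = 1 / real (R+1)"
  proof -
    have "0 < (R+L+1) choose (R+1)" by (simp only: zero_less_binomial_iff)
    then show ?thesis by (simp del: binomial_Suc_Suc)
  qed
  finally show ?thesis .
qed



lemma harm_sq': "(\<Sum>i\<le>L. (harm i - harm (L+1))^2 :: real) \<le> 2 * real (L+1)"
proof -
  have "(\<Sum>i\<le>L. (harm i - harm (L+1))^2 :: real) = (\<Sum>k<L+1. (harm (L+1) - harm k)^2)"
    by (simp add: lessThan_Suc_atMost power2_commute)
  also have "\<dots> \<le> 2 * real (L+1)" by (rule harm_sq)
  finally show ?thesis .
qed

lemma finite_var:
  fixes p X :: "'b \<Rightarrow> real"
  assumes "finite F" "(\<Sum>k\<in>F. p k) = 1" "\<mu> = (\<Sum>k\<in>F. p k * X k)"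
  shows "(\<Sum>k\<in>F. p k * (X k - \<mu>)^2) \<le> (\<Sum>k\<in>F. p k * (X k - c)^2)"
proof -
  have "(\<Sum>k\<in>F. p k * (X k - c)^2) = (\<Sum>k\<in>F. p k * (X k - \<mu>)^2 + 2 * (\<mu> - c) * (p k * X k) - 2 * (\<mu> - c) * \<mu> * p k + (\<mu> - c)^2 * p k)"
    by (rule sum.cong) (auto simp: power2_eq_square algebra_simps)
  also have "\<dots> = (\<Sum>k\<in>F. p k * (X k - \<mu>)^2) + 2 * (\<mu> - c) * (\<Sum>k\<in>F. p k * X k) - 2 * (\<mu> - c) * \<mu> * (\<Sum>k\<in>F. p k) + (\<mu> - c)^2 * (\<Sum>k\<in>F. p k)"
    by (simp add: sum.distrib sum_subtractf sum_distrib_left)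
  also have "\<dots> = (\<Sum>k\<in>F. p k * (X k - \<mu>)^2) + (\<mu> - c)^2"
    using assms by (simp add: power2_eq_square algebra_simps)
  finally show ?thesis by simp
qed

theorem lemma2:
  fixes M :: "'a measure" and G N :: "'a \<Rightarrow> int" and n l :: nat
  assumes "prob_space M"
    and "n \<ge> 1" and "l \<in> {1..n}"
    and "G \<in> measurable M (count_space UNIV)"
    and "N \<in> measurable M (count_space UNIV)"
    and "\<And>i j :: nat. measure M {x \<in> space M. G x = int i \<and> N x - 1 - G x = int j}
            = joint_prob n l i j"
  shows "prob_space.variance M
           (\<lambda>x. (harm (nat (G x)) :: real) + harm (nat (N x - 1 - G x))) \<le> 28"
proof -
  interpret P: prob_space M by fact
  define L where "L = l - 1"
  define R where "R = n - l"
  have lL: "l = L+1" and nLR: "n = L+R+1" using assms(3) by (auto simp: L_def R_def)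
  define p where "p = joint_prob n l"
  define E where "E = (\<lambda>i j. {x \<in> space M. G x = int i \<and> N x - 1 - G x = int j})"
  define F where "F = {..L} \<times> {..R}"
  have pE: "measure M (E i j) = p i j" for i j unfolding E_def p_def by (rule assms(6))
  note [measurable] = assms(4) assms(5)
  have meas_h: "(\<lambda>x. h (G x) (N x - 1 - G x)) \<in> borel_measurable M" for h :: "int \<Rightarrow> int \<Rightarrow> real"
  proof (rule measurable_compose_countable[where f = "\<lambda>g x. h g (N x - 1 - g)", OF _ assms(4)])
    fix g
    show "(\<lambda>x. h g (N x - 1 - g)) \<in> borel_measurable M"
      using measurable_compose[OF assms(5), of "\<lambda>k. h g (k - 1 - g)" borel] by simp
  qed
  have Esets: "E i j \<in> sets M" for i j
  proof -
    have pr: "(\<lambda>x. G x = int i \<and> N x - 1 - G x = int j) \<in> measurable M (count_space UNIV)"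
    proof (rule measurable_compose_countable[where f = "\<lambda>g x. g = int i \<and> N x - 1 - g = int j", OF _ assms(4)])
      fix g
      show "(\<lambda>x. g = int i \<and> N x - 1 - g = int j) \<in> measurable M (count_space UNIV)"
        using measurable_compose[OF assms(5), of "\<lambda>k. g = int i \<and> k - 1 - g = int j" "count_space UNIV"] by simp
    qed
    have "E i j = (\<lambda>x. G x = int i \<and> N x - 1 - G x = int j) -` {True} \<inter> space M"
      unfolding E_def by auto
    then show ?thesis using measurable_sets[OF pr, of "{True}"] by simp
  qed
  have Efin: "emeasure M (E i j) < \<top>" for i j
    using P.emeasure_finite[of "E i j"] by (simp add: less_top[symmetric])
  have finF: "finite F" unfolding F_def by simp
  have sum1: "(\<Sum>(i,j)\<in>F. p i j) = 1"
  proof -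
    have "(\<Sum>(i,j)\<in>F. p i j) = (\<Sum>i\<le>L. \<Sum>j\<le>R. p i j)"
      unfolding F_def by (simp add: sum.cartesian_product)
    also have "\<dots> = (\<Sum>i\<le>L. 1 / real (L+1))"
      unfolding p_def lL nLR by (intro sum.cong refl margG) auto
    also have "\<dots> = 1" by simp
    finally show ?thesis .
  qed
  have disj: "disjoint_family_on (\<lambda>(i,j). E i j) F"
    unfolding disjoint_family_on_def E_def by auto
  have "measure M (\<Union>k\<in>F. (\<lambda>(i,j). E i j) k) = (\<Sum>k\<in>F. measure M ((\<lambda>(i,j). E i j) k))"
    by (rule measure_finite_Union[OF finF _ disj]) (auto simp: Esets)
  also have "\<dots> = 1" using sum1 by (simp add: pE case_prod_unfold)
  finally have AEU: "AE x in M. x \<in> (\<Union>k\<in>F. (\<lambda>(i,j). E i j) k)"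
    by (rule P.AE_prob_1)
  have key: "integral\<^sup>L M (\<lambda>x. h (G x) (N x - 1 - G x)) = (\<Sum>(i,j)\<in>F. p i j * h (int i) (int j))"
    for h :: "int \<Rightarrow> int \<Rightarrow> real"
  proof -
    have "integral\<^sup>L M (\<lambda>x. h (G x) (N x - 1 - G x))
        = integral\<^sup>L M (\<lambda>x. \<Sum>(i,j)\<in>F. h (int i) (int j) * indicator (E i j) x)"
    proof (rule integral_cong_AE[OF meas_h])
      show "(\<lambda>x. \<Sum>(i,j)\<in>F. h (int i) (int j) * indicator (E i j) x) \<in> borel_measurable M"
        using Esets by (auto intro!: borel_measurable_sum borel_measurable_times borel_measurable_indicator simp: case_prod_unfold)
      show "AE x in M. h (G x) (N x - 1 - G x) = (\<Sum>(i,j)\<in>F. h (int i) (int j) * indicator (E i j) x)"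
        using AEU
      proof (rule eventually_mono)
        fix x assume "x \<in> (\<Union>k\<in>F. (\<lambda>(i,j). E i j) k)"
        then obtain i0 j0 where k0: "(i0,j0) \<in> F" "x \<in> E i0 j0" by auto
        have ind: "indicator (E i j) x = (if (i,j) = (i0,j0) then 1 else (0::real))" for i j
          using k0(2) unfolding E_def by (auto simp: indicator_def)
        have "(\<Sum>(i,j)\<in>F. h (int i) (int j) * indicator (E i j) x)
            = (\<Sum>k\<in>F. if k = (i0,j0) then h (int (fst k)) (int (snd k)) else 0)"
          by (rule sum.cong) (auto simp: ind split: if_splits)
        also have "\<dots> = h (int i0) (int j0)" using k0(1) finF by simp
        also have "\<dots> = h (G x) (N x - 1 - G x)" using k0(2) unfolding E_def by (metis (mono_tags, lifting) mem_Collect_eq)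
        finally show "h (G x) (N x - 1 - G x) = (\<Sum>(i,j)\<in>F. h (int i) (int j) * indicator (E i j) x)" by simp
      qed
    qed
    also have "\<dots> = (\<Sum>(i,j)\<in>F. integral\<^sup>L M (\<lambda>x. h (int i) (int j) * indicator (E i j) x))"
      unfolding case_prod_unfold
      by (rule Bochner_Integration.integral_sum[where f="\<lambda>k x. h (int (fst k)) (int (snd k)) * indicator (E (fst k) (snd k)) x"]) (auto intro!: integrable_mult_right integrable_real_indicator simp: Esets Efin)
    also have "\<dots> = (\<Sum>(i,j)\<in>F. p i j * h (int i) (int j))"
    proof (rule sum.cong, simp, clarify)
      fix i j
      have "E i j \<inter> space M = E i j" unfolding E_def by auto
      then show "integral\<^sup>L M (\<lambda>x. h (int i) (int j) * indicator (E i j) x) = p i j * h (int i) (int j)"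
        using pE[of i j] by simp
    qed
    finally show ?thesis .
  qed
  define X where "X = (\<lambda>(i::nat, j::nat). harm i + harm j :: real)"
  define \<mu> where "\<mu> = P.expectation (\<lambda>x. (harm (nat (G x)) :: real) + harm (nat (N x - 1 - G x)))"
  have mu: "\<mu> = (\<Sum>k\<in>F. (\<lambda>(i,j). p i j) k * X k)"
    unfolding \<mu>_def key[of "\<lambda>a b. harm (nat a) + harm (nat b)", simplified]
    by (simp add: X_def case_prod_unfold)
  have var: "P.variance (\<lambda>x. (harm (nat (G x)) :: real) + harm (nat (N x - 1 - G x)))
      = (\<Sum>k\<in>F. (\<lambda>(i,j). p i j) k * (X k - \<mu>)^2)"
    unfolding \<mu>_def[symmetric] key[of "\<lambda>a b. (harm (nat a) + harm (nat b) - \<mu>)^2", simplified]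
    by (simp add: X_def case_prod_unfold)
  define c where "c = harm (L+1) + (harm (R+1) :: real)"
  have "P.variance (\<lambda>x. (harm (nat (G x)) :: real) + harm (nat (N x - 1 - G x)))
      \<le> (\<Sum>k\<in>F. (\<lambda>(i,j). p i j) k * (X k - c)^2)"
    unfolding var by (rule finite_var[OF finF _ mu]) (use sum1 in \<open>simp add: case_prod_unfold\<close>)
  also have "\<dots> \<le> (\<Sum>(i,j)\<in>F. p i j * (2 * (harm i - harm (L+1))^2) + p i j * (2 * (harm j - harm (R+1))^2))"
  proof (rule sum_mono)
    fix k assume "k \<in> F"
    obtain i j where k: "k = (i,j)" by (cases k)
    have pn: "p i j \<ge> 0" unfolding p_def by (rule p_nonneg)
    define u where "u = harm i - (harm (L+1) :: real)"
    define v where "v = harm j - (harm (R+1) :: real)"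
    have xc: "X (i,j) - c = u + v" unfolding X_def c_def u_def v_def by simp
    have "2 * u^2 + 2 * v^2 - (u+v)^2 = (u - v)^2" by (simp add: power2_eq_square algebra_simps)
    moreover have "(u - v)^2 \<ge> 0" by simp
    ultimately have sq: "(X (i,j) - c)^2 \<le> 2 * (harm i - harm (L+1))^2 + 2 * (harm j - harm (R+1))^2"
      unfolding xc u_def[symmetric] v_def[symmetric] by linarith
    then show "(\<lambda>(i,j). p i j) k * (X k - c)^2
        \<le> (\<lambda>(i,j). p i j * (2 * (harm i - harm (L+1))^2) + p i j * (2 * (harm j - harm (R+1))^2)) k"
      using mult_left_mono[OF sq pn] unfolding k by (simp add: distrib_left)
  qed
  also have "\<dots> = 2 * (\<Sum>i\<le>L. (harm i - harm (L+1))^2 * (\<Sum>j\<le>R. p i j))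
                + 2 * (\<Sum>j\<le>R. (harm j - harm (R+1))^2 * (\<Sum>i\<le>L. p i j))"
  proof -
    have "(\<Sum>(i,j)\<in>F. p i j * (2 * (harm i - harm (L+1))^2) + p i j * (2 * (harm j - harm (R+1))^2))
        = (\<Sum>i\<le>L. \<Sum>j\<le>R. p i j * (2 * (harm i - harm (L+1))^2)) + (\<Sum>i\<le>L. \<Sum>j\<le>R. p i j * (2 * (harm j - harm (R+1))^2))"
      unfolding F_def sum.cartesian_product[symmetric] by (simp only: sum.distrib)
    also have "(\<Sum>i\<le>L. \<Sum>j\<le>R. p i j * (2 * (harm i - harm (L+1))^2)) = 2 * (\<Sum>i\<le>L. (harm i - harm (L+1))^2 * (\<Sum>j\<le>R. p i j))"
      by (simp add: sum_distrib_left sum_distrib_right mult_ac)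
    also have "(\<Sum>i\<le>L. \<Sum>j\<le>R. p i j * (2 * (harm j - harm (R+1))^2)) = (\<Sum>j\<le>R. \<Sum>i\<le>L. p i j * (2 * (harm j - harm (R+1))^2))"
      by (rule sum.swap)
    also have "\<dots> = 2 * (\<Sum>j\<le>R. (harm j - harm (R+1))^2 * (\<Sum>i\<le>L. p i j))"
      by (simp add: sum_distrib_left sum_distrib_right mult_ac)
    finally show ?thesis .
  qed
  also have "\<dots> = 2 * (\<Sum>i\<le>L. (harm i - harm (L+1))^2) / real (L+1)
                + 2 * (\<Sum>j\<le>R. (harm j - harm (R+1))^2) / real (R+1)"
  proof -
    have a: "(\<Sum>j\<le>R. p i j) = 1 / real (L+1)" if "i \<le> L" for i
      unfolding p_def lL nLR using that by (rule margG)
    have b: "(\<Sum>i\<le>L. p i j) = 1 / real (R+1)" if "j \<le> R" for j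
      unfolding p_def lL nLR using that by (rule margD)
    have a': "(\<Sum>i\<le>L. (harm i - harm (L+1))^2 * (\<Sum>j\<le>R. p i j)) = (\<Sum>i\<le>L. (harm i - harm (L+1))^2) / real (L+1)"
      by (simp add: a sum_divide_distrib)
    have b': "(\<Sum>j\<le>R. (harm j - harm (R+1))^2 * (\<Sum>i\<le>L. p i j)) = (\<Sum>j\<le>R. (harm j - harm (R+1))^2) / real (R+1)"
      by (simp add: b sum_divide_distrib)
    show ?thesis unfolding a' b' by simp
  qed
  also have "\<dots> \<le> 2 * 2 + 2 * 2"
    using harm_sq'[of L] harm_sq'[of R]
    by (intro add_mono mult_left_mono) (auto simp: divide_simps)
  finally show ?thesis by simp
qed

end
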